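(* Let $D\ge3$ and $n=2^D-1$, with coordinates indexed by $\mathbb F_2^D\setminus\{0\}$. Let $C\subseteq\mathbb F_2^n$ be the span of the restrictions to $\mathbb F_2^D\setminus\{0\}$ of the evaluation vectors of $1,x_1,\dots,x_D$ (the punctured first-order Reed–Muller code). Let $H_X$ be the single all-ones row of length $n$ and let $H_Z$ be any matrix with $\mathrm{rs}(H_Z)=C^\perp$. Then $(H_X,H_Z)$ is a CSS code with $k=D$, $d_X=2^{D-1}-1$ and $d_Z=2$, and it is phantom.
   Context: The evaluation vector of a Boolean polynomial $f$ in $x_1,\dots,x_D$ is $(f(a))_a$. $C^\perp$ is the dual code with respect to the standard dot product. CSS conventions: a CSS code is specified by $H_X,H_Z$ over $\mathbb F_2$ with $H_XH_Z^T=0$; $k=n-\operatorname{rank}H_X-\operatorname{rank}H_Z$; $d_X=\min\{|v|:v\in\ker H_Z\setminus\mathrm{rs}(H_X)\}$, $d_Z=\min\{|v|:v\in\ker H_X\setminus\mathrm{rs}(H_Z)\}$, where $\mathrm{rs}$ is row space and $\ker M=\{v:Mv^T=0\}$. A CSS logical basis is $L_X,L_Z\in\mathbb F_2^{k\times n}$ with rows of $L_X$ in $\ker H_Z$, rows of $L_Z$ in $\ker H_X$, $L_XL_Z^T=I_k$. A permutation with matrix $P$ implements the logical CNOT circuit $A\in GL(k,\mathbb F_2)$ if $\mathrm{rs}(H_XP)=\mathrm{rs}(H_X)$, $\mathrm{rs}(H_ZP)=\mathrm{rs}(H_Z)$, rows of $L_XP-AL_X$ lie in $\mathrm{rs}(H_X)$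 and rows of $L_ZP-A^{-T}L_Z$ lie in $\mathrm{rs}(H_Z)$. The code is phantom if some CSS logical basis admits, for every ordered pair $a\ne b$ in $[k]$, a permutation implementing $I_k+E_{ab}$ ($E_{ab}$ the matrix unit). *)

theory Defs
  imports Main "HOL-Library.Z2"
begin

text \<open>Vectors over F2 indexed by a finite coordinate set I are functions
  'c => bit vanishing outside I.  A matrix with m rows is a function
  nat => ('c => bit) of which only rows 0..m-1 are used.\<close>

type_synonym 'c vect = "'c \<Rightarrow> bit"

definition vecs :: "'c set \<Rightarrow> 'c vect set" where
  "vecs I = {v. \<forall>j. j \<notin> I \<longrightarrow> v j = 0}"

definition dot :: "'c set \<Rightarrow> 'c vect \<Rightarrow> 'c vect \<Rightarrow> bit" where
  "dot I u v = (\<Sum>j\<in>I. u j * v j)"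

definition weight :: "'c set \<Rightarrow> 'c vect \<Rightarrow> nat" where
  "weight I v = card {j\<in>I. v j \<noteq> 0}"

definition span :: "'c vect set \<Rightarrow> 'c vect set" where
  "span S = {v. \<exists>T c. finite T \<and> T \<subseteq> S \<and> v = (\<lambda>j. \<Sum>u\<in>T. c u * u j)}"

definition dim :: "'c vect set \<Rightarrow> nat" where
  "dim V = (LEAST r. \<exists>S. finite S \<and> card S = r \<and> S \<subseteq> V \<and> span S = V)"

definition rowsp :: "nat \<Rightarrow> (nat \<Rightarrow> 'c vect) \<Rightarrow> 'c vect set" where
  "rowsp m H = span (H ` {..<m})"

definition rank :: "nat \<Rightarrow> (nat \<Rightarrow> 'c vect) \<Rightarrow> nat" where
  "rank m H = dim (rowsp m H)"

definition ker :: "'c set \<Rightarrow> nat \<Rightarrow> (nat \<Rightarrow> 'c vect) \<Rightarrow> 'c vect set" where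
  "ker I m H = {v \<in> vecs I. \<forall>i<m. dot I (H i) v = 0}"

definition dual :: "'c set \<Rightarrow> 'c vect set \<Rightarrow> 'c vect set" where
  "dual I C = {v \<in> vecs I. \<forall>c\<in>C. dot I c v = 0}"

definition css :: "'c set \<Rightarrow> nat \<Rightarrow> (nat \<Rightarrow> 'c vect) \<Rightarrow> nat \<Rightarrow> (nat \<Rightarrow> 'c vect) \<Rightarrow> bool" where
  "css I mX HX mZ HZ \<longleftrightarrow> finite I \<and> (\<forall>i<mX. HX i \<in> vecs I) \<and> (\<forall>i<mZ. HZ i \<in> vecs I)
     \<and> (\<forall>i<mX. \<forall>j<mZ. dot I (HX i) (HZ j) = 0)"

definition css_k :: "'c set \<Rightarrow> nat \<Rightarrow> (nat \<Rightarrow> 'c vect) \<Rightarrow> nat \<Rightarrow> (nat \<Rightarrow> 'c vect) \<Rightarrow> nat" where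
  "css_k I mX HX mZ HZ = card I - rank mX HX - rank mZ HZ"

definition css_dX :: "'c set \<Rightarrow> nat \<Rightarrow> (nat \<Rightarrow> 'c vect) \<Rightarrow> nat \<Rightarrow> (nat \<Rightarrow> 'c vect) \<Rightarrow> nat" where
  "css_dX I mX HX mZ HZ = Min (weight I ` (ker I mZ HZ - rowsp mX HX))"

definition css_dZ :: "'c set \<Rightarrow> nat \<Rightarrow> (nat \<Rightarrow> 'c vect) \<Rightarrow> nat \<Rightarrow> (nat \<Rightarrow> 'c vect) \<Rightarrow> nat" where
  "css_dZ I mX HX mZ HZ = Min (weight I ` (ker I mX HX - rowsp mZ HZ))"

definition css_basis :: "'c set \<Rightarrow> nat \<Rightarrow> (nat \<Rightarrow> 'c vect) \<Rightarrow> nat \<Rightarrow> (nat \<Rightarrow> 'c vect)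
    \<Rightarrow> nat \<Rightarrow> (nat \<Rightarrow> 'c vect) \<Rightarrow> (nat \<Rightarrow> 'c vect) \<Rightarrow> bool" where
  "css_basis I mX HX mZ HZ k LX LZ \<longleftrightarrow>
     (\<forall>a<k. LX a \<in> ker I mZ HZ \<and> LZ a \<in> ker I mX HX) \<and>
     (\<forall>a<k. \<forall>b<k. dot I (LX a) (LZ b) = (if a = b then 1 else 0))"

text \<open>Right action of the permutation matrix of a bijection s of I on a row vector.\<close>
definition permute :: "'c set \<Rightarrow> ('c \<Rightarrow> 'c) \<Rightarrow> 'c vect \<Rightarrow> 'c vect" where
  "permute I s v = (\<lambda>j. if j \<in> I then v (s j) else 0)"

definition idm :: "nat \<Rightarrow> nat \<Rightarrow> bit" where
  "idm a b = (if a = b then 1 else 0)"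

definition matrows :: "nat \<Rightarrow> (nat \<Rightarrow> nat \<Rightarrow> bit) \<Rightarrow> (nat \<Rightarrow> 'c vect) \<Rightarrow> nat \<Rightarrow> 'c vect" where
  "matrows k A L = (\<lambda>a j. \<Sum>b<k. A a b * L b j)"

text \<open>The permutation s implements the logical CNOT circuit A in GL(k,F2); B is A^{-1},
  so (\<lambda>a b. B b a) is A^{-T}.\<close>
definition implements :: "'c set \<Rightarrow> nat \<Rightarrow> (nat \<Rightarrow> 'c vect) \<Rightarrow> nat \<Rightarrow> (nat \<Rightarrow> 'c vect)
    \<Rightarrow> nat \<Rightarrow> (nat \<Rightarrow> 'c vect) \<Rightarrow> (nat \<Rightarrow> 'c vect) \<Rightarrow> ('c \<Rightarrow> 'c) \<Rightarrow> (nat \<Rightarrow> nat \<Rightarrow> bit) \<Rightarrow> bool" where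
  "implements I mX HX mZ HZ k LX LZ s A \<longleftrightarrow> bij_betw s I I \<and>
     (\<exists>B. (\<forall>a<k. \<forall>b<k. (\<Sum>c<k. A a c * B c b) = idm a b) \<and>
          (\<forall>a<k. \<forall>b<k. (\<Sum>c<k. B a c * A c b) = idm a b) \<and>
          rowsp mX (\<lambda>i. permute I s (HX i)) = rowsp mX HX \<and>
          rowsp mZ (\<lambda>i. permute I s (HZ i)) = rowsp mZ HZ \<and>
          (\<forall>a<k. permute I s (LX a) - matrows k A LX a \<in> rowsp mX HX) \<and>
          (\<forall>a<k. permute I s (LZ a) - matrows k (\<lambda>a b. B b a) LZ a \<in> rowsp mZ HZ))"

definition phantom :: "'c set \<Rightarrow> nat \<Rightarrow> (nat \<Rightarrow> 'c vect) \<Rightarrow> nat \<Rightarrow> (nat \<Rightarrow> 'c vect) \<Rightarrow> bool" where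
  "phantom I mX HX mZ HZ \<longleftrightarrow> (let k = css_k I mX HX mZ HZ in
     \<exists>LX LZ. css_basis I mX HX mZ HZ k LX LZ \<and>
       (\<forall>a<k. \<forall>b<k. a \<noteq> b \<longrightarrow>
          (\<exists>s. implements I mX HX mZ HZ k LX LZ s (\<lambda>i j. idm i j + (if i = a \<and> j = b then 1 else 0)))))"

definition coords :: "nat \<Rightarrow> bit list set" where
  "coords D = {a. length a = D \<and> a \<noteq> replicate D 0}"

definition evalv :: "nat \<Rightarrow> (bit list \<Rightarrow> bit) \<Rightarrow> bit list vect" where
  "evalv D f = (\<lambda>a. if a \<in> coords D then f a else 0)"

definition RM1p :: "nat \<Rightarrow> bit list vect set" where
  "RM1p D = span (insert (evalv D (\<lambda>_. 1)) ((\<lambda>i. evalv D (\<lambda>a. a ! i)) ` {..<D}))"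

end

theory Submission
  imports Defs "HOL-Library.Function_Algebras" "HOL.Vector_Spaces"
begin

declare add_bit_eq_xor[simp del] mult_bit_eq_and[simp del]

definition sc :: "bit \<Rightarrow> bit list vect \<Rightarrow> bit list vect" where
  "sc c f = (\<lambda>j. c * f j)"

lemma sc_apply[simp]: "sc c f j = c * f j" by (simp add: sc_def)

interpretation bv: vector_space sc
  by unfold_locales (auto simp: fun_eq_iff algebra_simps sc_def)

lemma bit_add_self[simp]: "(x::bit) + x = 0"
  by (cases x) auto

lemma sum_fun_apply: "(sum f A) x = (\<Sum>a\<in>A. f a x)"
  by (induction A rule: infinite_finite_induct) auto

lemma span_eq: "Defs.span (S :: bit list vect set) = bv.span S"
  unfolding Defs.span_def bv.span_explicit
  by (auto simp: sum_fun_apply fun_eq_iff)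

lemma rowsp_eq: "rowsp m (H :: nat \<Rightarrow> bit list vect) = bv.span (H ` {..<m})"
  by (simp add: rowsp_def span_eq)

lemma dim_eq:
  assumes "finite (B :: bit list vect set)"
  shows "Defs.dim (bv.span B) = bv.dim (bv.span B)"
proof -
  obtain B' where B': "B' \<subseteq> bv.span B" "bv.independent B'" "bv.span B \<subseteq> bv.span B'"
     "card B' = bv.dim (bv.span B)"
    using bv.basis_exists by blast
  have fin: "finite B'" using bv.independent_span_bound[OF assms B'(2)] B'(1) by blast
  have sp: "bv.span B' = bv.span B"
    using B'(1,3) bv.span_mono bv.span_span by (metis subset_antisym)
  show ?thesis
    unfolding Defs.dim_def span_eq
  proof (rule Least_equality)
    show "\<exists>S. finite S \<and> card S = bv.dim (bv.span B) \<and> S \<subseteq> bv.span B \<and> bv.span S = bv.span B"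
      using fin sp B' by blast
  next
    fix r assume "\<exists>S. finite S \<and> card S = r \<and> S \<subseteq> bv.span B \<and> bv.span S = bv.span B"
    then obtain S where S: "finite S" "card S = r" "bv.span S = bv.span B" by blast
    show "bv.dim (bv.span B) \<le> r"
      using bv.independent_span_bound[OF S(1) B'(2)] B'(1) S B'(4) by auto
  qed
qed

lemma rank_eq: "rank m (H :: nat \<Rightarrow> bit list vect) = bv.dim (rowsp m H)"
  unfolding rank_def rowsp_eq by (rule dim_eq) simp

abbreviation onev :: "nat \<Rightarrow> bit list vect" where "onev D \<equiv> evalv D (\<lambda>_. 1)"
abbreviation xv :: "nat \<Rightarrow> nat \<Rightarrow> bit list vect" where "xv D i \<equiv> evalv D (\<lambda>a. a ! i)"

lemma bit_UNIV: "(UNIV::bit set) = {0,1}"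
  using bit_not_zero_iff by auto

lemma finite_coords[simp]: "finite (coords D)"
proof -
  have "coords D \<subseteq> {xs. set xs \<subseteq> UNIV \<and> length xs = D}" by (auto simp: coords_def)
  moreover have "finite {xs. set xs \<subseteq> (UNIV::bit set) \<and> length xs = D}"
    by (rule finite_lists_length_eq) (simp add: bit_UNIV)
  ultimately show ?thesis using finite_subset by blast
qed

lemma evalv_vecs[simp]: "evalv D f \<in> vecs (coords D)"
  by (simp add: vecs_def evalv_def)

lemma dot_evalv: "dot (coords D) (evalv D f) v = (\<Sum>a\<in>coords D. f a * v a)"
  by (simp add: dot_def evalv_def)

lemma dot_comm: "dot I u v = dot I v u"
  by (simp add: dot_def mult.commute)

lemma dot_add2: "dot I u (v + w) = dot I u v + dot I u w"
  by (simp add: dot_def sum.distrib distrib_left)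

lemma dot_diff2: "dot I u (v - w) = dot I u v - dot I u w"
  by (simp add: dot_def sum.distrib distrib_left)

lemma dot_sc2: "dot I u (sc c v) = c * dot I u v"
  by (simp add: dot_def sum_distrib_left algebra_simps)

lemma dot_diff1: "dot I (v - w) u = dot I v u - dot I w u"
  by (simp add: dot_def sum.distrib distrib_right)

lemma dot_add1: "dot I (v + w) u = dot I v u + dot I w u"
  by (simp add: dot_def sum.distrib distrib_right)

lemma dot_sc1: "dot I (sc c v) u = c * dot I v u"
  by (simp add: dot_def sum_distrib_left algebra_simps)

lemma dot_zero2[simp]: "dot I u 0 = 0" by (simp add: dot_def)
lemma dot_zero1[simp]: "dot I 0 u = 0" by (simp add: dot_def)

lemma dot_sum2: "dot I u (sum f A) = (\<Sum>a\<in>A. dot I u (f a))"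
  by (simp add: dot_def sum_fun_apply sum_distrib_left sum.swap[of _ I])

lemma vecs_subspace: "bv.subspace (vecs I)"
  by (auto simp: bv.subspace_def vecs_def)

lemma dual_subspace: "bv.subspace (dual I X)"
  unfolding bv.subspace_def dual_def
  using vecs_subspace[of I] by (auto simp: bv.subspace_def dot_add2 dot_sc2)

lemma dual_span: "dual I (bv.span G) = dual I G"
proof
  show "dual I (bv.span G) \<subseteq> dual I G" using bv.span_superset by (auto simp: dual_def)
next
  show "dual I G \<subseteq> dual I (bv.span G)"
  proof
    fix v assume v: "v \<in> dual I G"
    have "\<forall>c\<in>bv.span G. dot I c v = 0"
    proof
      fix c assume "c \<in> bv.span G"
      then show "dot I c v = 0"
      proof (rule bv.span_induct)
        show "bv.subspace {c. dot I c v = 0}"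
          by (auto simp: bv.subspace_def dot_add1 dot_sc1)
      qed (use v in \<open>auto simp: dual_def\<close>)
    qed
    then show "v \<in> dual I (bv.span G)" using v by (auto simp: dual_def)
  qed
qed

lemma RM1p_eq: "RM1p D = bv.span (insert (onev D) (xv D ` {..<D}))"
  by (simp add: RM1p_def span_eq)

lemma mem_dualC: "v \<in> dual (coords D) (RM1p D) \<longleftrightarrow>
   v \<in> vecs (coords D) \<and> dot (coords D) (onev D) v = 0 \<and> (\<forall>i<D. dot (coords D) (xv D i) v = 0)"
  unfolding RM1p_eq dual_span by (auto simp: dual_def)

definition sig :: "nat \<Rightarrow> nat \<Rightarrow> bit list" where
  "sig D k = map (\<lambda>j. if j = k \<or> (k = D \<and> j < 2) then 1 else 0) [0..<D]"

lemma sig_nth: "j < D \<Longrightarrow> sig D k ! j = (if j = k \<or> (k = D \<and> j < 2) then 1 else 0)"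
  by (simp add: sig_def)

lemma length_sig[simp]: "length (sig D k) = D" by (simp add: sig_def)

lemma sig_coords: assumes "k \<le> D" "D \<ge> 1" shows "sig D k \<in> coords D"
proof -
  have "sig D k ! (if k < D then k else 0) = 1" using assms by (auto simp: sig_nth)
  moreover have "replicate D 0 ! (if k < D then k else 0) = (0::bit)" using assms by auto
  ultimately show ?thesis by (auto simp: coords_def)
qed

lemma inj_sig: assumes "D \<ge> 3" shows "inj_on (sig D) {..D}"
proof (rule inj_onI)
  fix k l assume k: "k \<in> {..D}" and l: "l \<in> {..D}" and e: "sig D k = sig D l"
  show "k = l"
  proof (rule ccontr)
    assume ne: "k \<noteq> l"
    define j where "j = (if k < D \<and> l < D then k else if k = D then (if l \<ge> 2 then 0 else 1 - l) else (if k \<ge> 2 then 0 else 1 - k))"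
    have "j < D" using assms k l by (auto simp: j_def)
    moreover have "sig D k ! j \<noteq> sig D l ! j"
      using ne k l assms \<open>j < D\<close> by (auto simp: sig_nth j_def split: if_splits) presburger+
    ultimately show False using e by simp
  qed
qed

lemma sig_in: "D \<ge> 3 \<Longrightarrow> k \<le> D \<Longrightarrow> sig D k \<in> coords D"
  by (rule sig_coords) auto

lemma sum_lt2: fixes D :: nat assumes "D \<ge> 2" shows "(\<Sum>k<D. if k < 2 then c else 0) = (0::bit)"
proof -
  have "{k\<in>{..<D}. k < 2} = {0,1}" using assms by auto
  then have "(\<Sum>k<D. if k < 2 then c else 0) = (\<Sum>k\<in>{0::nat,1}. c)"
    by (simp add: sum.inter_filter[symmetric])
  then show ?thesis by simp
qed

lemma sum_atMost_split: fixes D :: nat shows "(\<Sum>k\<le>D. f k) = (\<Sum>k<D. f k) + f D"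
proof -
  have "{..D} = insert D {..<D}" by auto
  then show ?thesis by (simp add: add.commute)
qed

lemma sum_sig_xv: assumes "i < D"
  shows "(\<Sum>k\<le>D. (sig D k ! i) * y k) = y i + (if i < 2 then y D else (0::bit))"
proof -
  have "(\<Sum>k<D. (sig D k ! i) * y k) = (\<Sum>k<D. if k = i then y k else 0)"
    using assms by (intro sum.cong) (auto simp: sig_nth)
  also have "\<dots> = y i" using assms by simp
  finally show ?thesis using assms by (simp add: sum_atMost_split sig_nth)
qed

lemma sum_sig_support:
  assumes D: "D \<ge> 3" and h: "\<And>q. q \<in> coords D \<Longrightarrow> q \<notin> sig D ` {..D} \<Longrightarrow> h q = 0"
  shows "(\<Sum>q\<in>coords D. h q) = (\<Sum>k\<le>D. h (sig D k))"
proof -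
  have sub: "sig D ` {..D} \<subseteq> coords D" using sig_in[OF D] by auto
  have "(\<Sum>q\<in>coords D. h q) = (\<Sum>q\<in>sig D ` {..D}. h q)"
    by (rule sum.mono_neutral_right) (use sub h in auto)
  also have "\<dots> = (\<Sum>k\<le>D. h (sig D k))"
    by (rule sum.reindex[OF inj_sig[OF D], unfolded comp_def])
  finally show ?thesis .
qed

definition delta :: "bit list \<Rightarrow> bit list vect" where
  "delta p = (\<lambda>q. if q = p then 1 else 0)"

lemma delta_vecs: "p \<in> I \<Longrightarrow> delta p \<in> vecs I"
  by (simp add: delta_def vecs_def)

lemma dot_delta: "finite I \<Longrightarrow> p \<in> I \<Longrightarrow> dot I g (delta p) = g p"
  by (simp add: dot_def delta_def if_distrib cong: if_cong)

lemma uniq: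
  assumes D: "D \<ge> 3" and v: "v \<in> dual (coords D) (RM1p D)"
    and R: "\<And>q. q \<in> coords D \<Longrightarrow> q \<notin> sig D ` {..D} \<Longrightarrow> v q = 0"
  shows "v = 0"
proof -
  define y where "y k = v (sig D k)" for k
  have v': "v \<in> vecs (coords D)" "dot (coords D) (onev D) v = 0"
     "\<And>i. i < D \<Longrightarrow> dot (coords D) (xv D i) v = 0"
    using v by (auto simp: mem_dualC)
  have yi: "y i = (if i < 2 then y D else 0)" if "i < D" for i
  proof -
    have "0 = dot (coords D) (xv D i) v" using v'(3) that by simp
    also have "\<dots> = (\<Sum>a\<in>coords D. a ! i * v a)" by (simp add: dot_evalv)
    also have "\<dots> = (\<Sum>k\<le>D. sig D k ! i * y k)"
      unfolding y_def by (rule sum_sig_support[OF D]) (use R in auto)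
    also have "\<dots> = y i + (if i < 2 then y D else 0)" by (rule sum_sig_xv[OF that])
    finally show ?thesis by (cases "y i"; cases "y D"; auto split: if_splits)
  qed
  have "0 = dot (coords D) (onev D) v" using v'(2) by simp
  also have "\<dots> = (\<Sum>a\<in>coords D. v a)" by (simp add: dot_evalv)
  also have "\<dots> = (\<Sum>k\<le>D. y k)"
    unfolding y_def by (rule sum_sig_support[OF D]) (use R in auto)
  also have "\<dots> = (\<Sum>k<D. if k < 2 then y D else 0) + y D"
    using yi by (simp add: sum_atMost_split)
  also have "\<dots> = y D" using sum_lt2[of D "y D"] D by simp
  finally have yD: "y D = 0" by simp
  have y0: "y k = 0" if "k \<le> D" for k
    using yi yD that by (cases "k = D") auto
  show "v = 0"
  proof
    fix q
    show "v q = 0 q"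
    proof (cases "q \<in> coords D")
      case False then show ?thesis using v'(1) by (simp add: vecs_def)
    next
      case True
      show ?thesis
      proof (cases "q \<in> sig D ` {..D}")
        case True then show ?thesis using y0 y_def by auto
      qed (use R True in auto)
    qed
  qed
qed

definition tpar :: "nat \<Rightarrow> bit list \<Rightarrow> bit" where
  "tpar D p = 1 + (\<Sum>i<D. p ! i)"

definition beta :: "nat \<Rightarrow> bit list \<Rightarrow> nat \<Rightarrow> bit" where
  "beta D p k = (if k < D then p ! k + (if k < 2 then tpar D p else 0) else tpar D p)"

definition bvec :: "nat \<Rightarrow> bit list \<Rightarrow> bit list vect" where
  "bvec D p = delta p + (\<Sum>k\<le>D. sc (beta D p k) (delta (sig D k)))"

definition RR :: "nat \<Rightarrow> bit list set" where
  "RR D = coords D - sig D ` {..D}"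

lemma bvec_vecs: assumes "D \<ge> 3" "p \<in> coords D" shows "bvec D p \<in> vecs (coords D)"
  unfolding bvec_def
  by (intro bv.subspace_add[OF vecs_subspace] bv.subspace_sum[OF vecs_subspace]
        bv.subspace_scale[OF vecs_subspace] delta_vecs sig_in assms) auto

lemma dot_bvec: assumes "D \<ge> 3" "p \<in> coords D"
  shows "dot (coords D) g (bvec D p) = g p + (\<Sum>k\<le>D. beta D p k * g (sig D k))"
  unfolding bvec_def dot_add2 dot_sum2 dot_sc2
  using assms sig_in[OF assms(1)] by (simp add: dot_delta)

lemma bvec_dual: assumes D: "D \<ge> 3" and p: "p \<in> coords D"
  shows "bvec D p \<in> dual (coords D) (RM1p D)"
  unfolding mem_dualC
proof (intro conjI allI impI)
  show "bvec D p \<in> vecs (coords D)" by (rule bvec_vecs[OF D p])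
next
  have "(\<Sum>k<D. beta D p k) = (\<Sum>k<D. p ! k + (if k < 2 then tpar D p else 0))"
    by (simp add: beta_def)
  also have "\<dots> = (\<Sum>k<D. p ! k) + (\<Sum>k<D. if k < 2 then tpar D p else 0)"
    by (rule sum.distrib)
  also have "\<dots> = (\<Sum>k<D. p ! k)" using sum_lt2[of D] D by simp
  finally have s: "(\<Sum>k<D. beta D p k) = (\<Sum>k<D. p ! k)" .
  have "dot (coords D) (onev D) (bvec D p) = 1 + (\<Sum>k\<le>D. beta D p k)"
    using dot_bvec[OF D p] p sig_in[OF D] by (simp add: evalv_def)
  also have "\<dots> = 1 + (\<Sum>k<D. p ! k) + tpar D p"
    unfolding sum_atMost_split s by (simp add: beta_def add.assoc)
  also have "\<dots> = 0" by (simp add: tpar_def)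
  finally show "dot (coords D) (onev D) (bvec D p) = 0" .
next
  fix i assume i: "i < D"
  have "dot (coords D) (xv D i) (bvec D p) = p ! i + (\<Sum>k\<le>D. beta D p k * sig D k ! i)"
    using dot_bvec[OF D p] p sig_in[OF D] by (simp add: evalv_def)
  also have "(\<Sum>k\<le>D. beta D p k * sig D k ! i) = (\<Sum>k\<le>D. sig D k ! i * beta D p k)"
    by (simp add: mult.commute)
  also have "\<dots> = beta D p i + (if i < 2 then beta D p D else 0)" by (rule sum_sig_xv[OF i])
  finally show "dot (coords D) (xv D i) (bvec D p) = 0"
    using i by (simp add: beta_def add.assoc[symmetric])
qed

lemma bvec_R: assumes D: "D \<ge> 3" and q: "q \<in> RR D"
  shows "bvec D p q = (if q = p then 1 else 0)"
proof -
  have "(\<Sum>k\<le>D. sc (beta D p k) (delta (sig D k))) q = 0"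
    using q unfolding sum_fun_apply by (auto simp: RR_def delta_def intro!: sum.neutral)
  then show ?thesis by (simp add: bvec_def delta_def)
qed

lemma dualC_span: assumes D: "D \<ge> 3"
  shows "dual (coords D) (RM1p D) = bv.span (bvec D ` RR D)"
proof
  show "bv.span (bvec D ` RR D) \<subseteq> dual (coords D) (RM1p D)"
    by (rule bv.span_minimal[OF _ dual_subspace]) (use bvec_dual[OF D] in \<open>auto simp: RR_def\<close>)
next
  show "dual (coords D) (RM1p D) \<subseteq> bv.span (bvec D ` RR D)"
  proof
    fix v assume v: "v \<in> dual (coords D) (RM1p D)"
    define u where "u = (\<Sum>p\<in>RR D. sc (v p) (bvec D p))"
    have uin: "u \<in> dual (coords D) (RM1p D)"
      unfolding u_def
      by (intro bv.subspace_sum[OF dual_subspace] bv.subspace_scale[OF dual_subspace] bvec_dual[OF D])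
        (auto simp: RR_def)
    have fin: "finite (RR D)" by (simp add: RR_def)
    have "v - u = 0"
    proof (rule uniq[OF D])
      show "v - u \<in> dual (coords D) (RM1p D)" by (rule bv.subspace_diff[OF dual_subspace v uin])
    next
      fix q assume "q \<in> coords D" "q \<notin> sig D ` {..D}"
      then have q: "q \<in> RR D" by (simp add: RR_def)
      have "u q = (\<Sum>p\<in>RR D. v p * (if q = p then 1 else 0))"
        unfolding u_def sum_fun_apply using bvec_R[OF D q] by simp
      also have "\<dots> = v q" using q fin by (simp add: if_distrib cong: if_cong)
      finally show "(v - u) q = 0" by simp
    qed
    then have "v = u" by simp
    have "u \<in> bv.span (bvec D ` RR D)"
      unfolding u_def by (intro bv.span_sum bv.span_scale bv.span_base imageI)
    then show "v \<in> bv.span (bvec D ` RR D)" using \<open>v = u\<close> by simp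
  qed
qed

lemma bvec_indep: assumes D: "D \<ge> 3" shows "bv.independent (bvec D ` RR D)"
  unfolding bv.dependent_explicit
proof clarify
  fix t u v assume t: "finite t" "t \<subseteq> bvec D ` RR D" and s: "(\<Sum>v\<in>t. sc (u v) v) = 0"
    and vt: "v \<in> t" and uv: "u v \<noteq> 0"
  obtain p where p: "p \<in> RR D" "v = bvec D p" using t vt by auto
  have "0 = (\<Sum>v\<in>t. sc (u v) v) p" using s by simp
  also have "\<dots> = (\<Sum>w\<in>t. if w = v then u w else 0)"
    unfolding sum_fun_apply
  proof (rule sum.cong[OF refl])
    fix w assume "w \<in> t"
    then obtain p' where p': "p' \<in> RR D" "w = bvec D p'" using t by auto
    have "w = v \<longleftrightarrow> p' = p"
      using bvec_R[OF D p(1), of p'] bvec_R[OF D p(1), of p] p p' by (auto split: if_splits)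
    then show "sc (u w) w p = (if w = v then u w else 0)"
      using bvec_R[OF D p(1), of p'] p' by auto
  qed
  also have "\<dots> = u v" using t vt by simp
  finally show False using uv by simp
qed

lemma inj_bvec: assumes D: "D \<ge> 3" shows "inj_on (bvec D) (RR D)"
proof (rule inj_onI)
  fix p q assume "p \<in> RR D" "q \<in> RR D" "bvec D p = bvec D q"
  then show "p = q" using bvec_R[OF D, of p p] bvec_R[OF D, of p q] by (auto split: if_splits)
qed

lemma card_RR: assumes D: "D \<ge> 3" shows "card (RR D) = card (coords D) - (D + 1)"
proof -
  have "card (sig D ` {..D}) = D + 1" using card_image[OF inj_sig[OF D]] by simp
  moreover have "sig D ` {..D} \<subseteq> coords D" using sig_in[OF D] by auto
  ultimately show ?thesis unfolding RR_def by (simp add: card_Diff_subset finite_subset)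
qed

lemma card_coords_ge: assumes D: "D \<ge> 3" shows "card (coords D) \<ge> D + 1"
proof -
  have "card (sig D ` {..D}) = D + 1" using card_image[OF inj_sig[OF D]] by simp
  moreover have "sig D ` {..D} \<subseteq> coords D" using sig_in[OF D] by auto
  ultimately show ?thesis using card_mono[OF finite_coords] by metis
qed

lemma dim_dualC: assumes D: "D \<ge> 3"
  shows "bv.dim (dual (coords D) (RM1p D)) = card (coords D) - (D + 1)"
  unfolding dualC_span[OF D] bv.dim_span_eq_card_independent[OF bvec_indep[OF D]]
  using card_image[OF inj_bvec[OF D]] card_RR[OF D] by simp

definition aff :: "nat \<Rightarrow> bit \<Rightarrow> (nat \<Rightarrow> bit) \<Rightarrow> bit list vect" where
  "aff D c0 c = evalv D (\<lambda>a. c0 + (\<Sum>i<D. c i * a ! i))"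

lemma aff_C: "aff D c0 c \<in> RM1p D"
proof -
  have "aff D c0 c = sc c0 (onev D) + (\<Sum>i<D. sc (c i) (xv D i))"
    by (auto simp: fun_eq_iff aff_def evalv_def sum_fun_apply)
  also have "\<dots> \<in> RM1p D"
    unfolding RM1p_eq by (intro bv.span_add bv.span_sum bv.span_scale bv.span_base) auto
  finally show ?thesis .
qed

lemma C_aff: assumes "v \<in> RM1p D" shows "\<exists>c0 c. v = aff D c0 c"
proof -
  have sub: "bv.subspace {v. \<exists>c0 c. v = aff D c0 c}"
    unfolding bv.subspace_def
  proof (intro conjI ballI allI)
    show "0 \<in> {v. \<exists>c0 c. v = aff D c0 c}"
      by (rule CollectI, rule exI[of _ 0], rule exI[of _ "\<lambda>_. 0"]) (auto simp: aff_def evalv_def fun_eq_iff)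
  next
    fix x y assume "x \<in> {v. \<exists>c0 c. v = aff D c0 c}" "y \<in> {v. \<exists>c0 c. v = aff D c0 c}"
    then obtain a0 a b0 b where "x = aff D a0 a" "y = aff D b0 b" by auto
    then show "x + y \<in> {v. \<exists>c0 c. v = aff D c0 c}"
      by (intro CollectI exI[of _ "a0 + b0"] exI[of _ "\<lambda>i. a i + b i"])
        (auto simp: aff_def evalv_def fun_eq_iff sum.distrib distrib_right add_ac)
  next
    fix c x assume "x \<in> {v. \<exists>c0 c. v = aff D c0 c}"
    then obtain a0 a where "x = aff D a0 a" by auto
    then show "sc c x \<in> {v. \<exists>c0 c. v = aff D c0 c}"
      by (intro CollectI exI[of _ "c * a0"] exI[of _ "\<lambda>i. c * a i"])
        (auto simp: aff_def evalv_def fun_eq_iff sum_distrib_left distrib_left mult_ac)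
  qed
  have gen: "insert (onev D) (xv D ` {..<D}) \<subseteq> {v. \<exists>c0 c. v = aff D c0 c}"
  proof
    fix x assume "x \<in> insert (onev D) (xv D ` {..<D})"
    then show "x \<in> {v. \<exists>c0 c. v = aff D c0 c}"
    proof
      assume "x = onev D"
      then show ?thesis
        by (intro CollectI exI[of _ 1] exI[of _ "\<lambda>_. 0"]) (auto simp: aff_def)
    next
      assume "x \<in> xv D ` {..<D}"
      then obtain i where i: "i < D" "x = xv D i" by auto
      have "(\<Sum>j<D. (if j = i then 1 else 0) * a ! j) = a ! i" for a :: "bit list"
      proof -
        have "(\<Sum>j<D. (if j = i then 1 else 0) * a ! j) = (\<Sum>j<D. if j = i then a ! j else 0)"
          by (intro sum.cong) auto
        then show ?thesis using i by simp
      qed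
      then show ?thesis using i
        by (intro CollectI exI[of _ 0] exI[of _ "\<lambda>j. if j = i then 1 else 0"])
          (simp add: aff_def)
    qed
  qed
  have "RM1p D \<subseteq> {v. \<exists>c0 c. v = aff D c0 c}"
    unfolding RM1p_eq by (rule bv.span_minimal[OF gen sub])
  then show ?thesis using assms by auto
qed

lemma C_vecs: "RM1p D \<subseteq> vecs (coords D)"
  unfolding RM1p_eq by (rule bv.span_minimal[OF _ vecs_subspace]) auto

lemma sum_c_sig: assumes "k \<le> D" "D \<ge> 2"
  shows "(\<Sum>i<D. c i * sig D k ! i) = (if k < D then c k else c 0 + c 1)"
proof (cases "k < D")
  case True
  have "(\<Sum>i<D. c i * sig D k ! i) = (\<Sum>i<D. if i = k then c i else 0)"
    using True by (intro sum.cong) (auto simp: sig_nth)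
  then show ?thesis using True by simp
next
  case False
  then have k: "k = D" using assms by simp
  have "(\<Sum>i<D. c i * sig D k ! i) = (\<Sum>i<D. if i < 2 then c i else 0)"
    by (intro sum.cong) (auto simp: sig_nth k)
  also have "\<dots> = (\<Sum>i\<in>{i\<in>{..<D}. i < 2}. c i)"
    by (rule sum.inter_filter[symmetric]) simp
  also have "{i\<in>{..<D}. i < 2} = {0, 1}" using assms by auto
  finally show ?thesis using k by simp
qed

lemma ddual: assumes D: "D \<ge> 3"
  shows "dual (coords D) (dual (coords D) (RM1p D)) = RM1p D"
proof
  show "RM1p D \<subseteq> dual (coords D) (dual (coords D) (RM1p D))"
    using C_vecs by (auto simp: dual_def dot_comm)
next
  show "dual (coords D) (dual (coords D) (RM1p D)) \<subseteq> RM1p D"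
  proof
    fix v assume v: "v \<in> dual (coords D) (dual (coords D) (RM1p D))"
    define y where "y k = v (sig D k)" for k
    define c0 where "c0 = y 0 + y 1 + y D"
    define c where "c i = y i + c0" for i
    define f where "f = aff D c0 c"
    have fC: "f \<in> RM1p D" unfolding f_def by (rule aff_C)
    have fs: "f (sig D k) = y k" if "k \<le> D" for k
    proof -
      have "f (sig D k) = c0 + (if k < D then c k else c 0 + c 1)"
        using sig_in[OF D that] sum_c_sig[OF that, of c] D by (simp add: f_def aff_def evalv_def)
      then show ?thesis unfolding c_def c0_def using that
        by (cases "y 0"; cases "y 1"; cases "y D"; cases "y k"; auto)
    qed
    define w where "w = v - f"
    have wv: "w \<in> vecs (coords D)"
      unfolding w_def using v fC C_vecs by (intro bv.subspace_diff[OF vecs_subspace]) (auto simp: dual_def)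
    have ws: "w (sig D k) = 0" if "k \<le> D" for k
      using fs[OF that] by (simp add: w_def y_def)
    have wR: "w p = 0" if p: "p \<in> RR D" for p
    proof -
      have pc: "p \<in> coords D" using p by (simp add: RR_def)
      have bd: "bvec D p \<in> dual (coords D) (RM1p D)" by (rule bvec_dual[OF D pc])
      have "dot (coords D) (bvec D p) v = 0" using v bd by (auto simp: dual_def)
      moreover have "dot (coords D) (bvec D p) f = 0" using fC bd by (auto simp: dual_def dot_comm)
      ultimately have "dot (coords D) w (bvec D p) = 0"
        by (simp add: w_def dot_diff1 dot_comm[of _ "bvec D p"])
      moreover have "dot (coords D) w (bvec D p) = w p"
        using dot_bvec[OF D pc, of w] ws by simp
      ultimately show ?thesis by simp
    qed
    have "w = 0"
    proof
      fix q show "w q = 0 q"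
        using wv ws wR by (cases "q \<in> coords D"; cases "q \<in> sig D ` {..D}") (auto simp: vecs_def RR_def)
    qed
    then have "v = f" by (simp add: w_def)
    then show "v \<in> RM1p D" using fC by simp
  qed
qed

definition lin :: "nat \<Rightarrow> (nat \<Rightarrow> bit) \<Rightarrow> bit list \<Rightarrow> bit" where
  "lin D c a = (\<Sum>i<D. c i * a ! i)"

lemma card_bit: "card (UNIV :: bit set) = 2" by (simp add: bit_UNIV)
lemma finite_bit: "finite (UNIV :: bit set)" by (simp add: bit_UNIV)

lemma finite_L: "finite {a :: bit list. length a = D}"
  using finite_lists_length_eq[OF finite_bit, of D] by simp

lemma card_lists: "card {a :: bit list. length a = D} = 2 ^ D"
  using card_lists_length_eq[OF finite_bit, of D] card_bit by simp

lemma card_lin: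
  assumes j: "j < D" "c j = 1"
  shows "card {a. length a = D \<and> lin D c a = 0} = 2 ^ (D - 1)"
    and "card {a. length a = D \<and> lin D c a = 1} = 2 ^ (D - 1)"
proof -
  define fl where "fl a = a[j := a ! j + 1]" for a :: "bit list"
  define A0 where "A0 = {a. length a = D \<and> lin D c a = 0}"
  define A1 where "A1 = {a. length a = D \<and> lin D c a = 1}"
  have linfl: "lin D c (fl a) = lin D c a + 1" if "length a = D" for a
  proof -
    have "lin D c (fl a) = (\<Sum>i<D. c i * a ! i + (if i = j then 1 else 0))"
      unfolding lin_def fl_def using that j by (intro sum.cong) (auto simp: nth_list_update distrib_left)
    also have "\<dots> = lin D c a + 1" using j by (simp add: sum.distrib lin_def)
    finally show ?thesis .
  qed
  have flfl: "fl (fl a) = a" if "length a = D" for a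
    using that j by (simp add: fl_def add.assoc)
  have lfl: "length (fl a) = length a" for a by (simp add: fl_def)
  have i0: "fl ` A0 \<subseteq> A1"
  proof
    fix b assume "b \<in> fl ` A0"
    then obtain a where "a \<in> A0" "b = fl a" by auto
    then show "b \<in> A1" using linfl[of a] lfl[of a] by (simp add: A0_def A1_def)
  qed
  have i1: "fl ` A1 \<subseteq> A0"
  proof
    fix b assume "b \<in> fl ` A1"
    then obtain a where "a \<in> A1" "b = fl a" by auto
    then show "b \<in> A0" using linfl[of a] lfl[of a] by (simp add: A0_def A1_def)
  qed
  have bij: "bij_betw fl A0 A1"
    by (rule bij_betw_byWitness[where f' = fl]) (use i0 i1 flfl in \<open>auto simp: A0_def A1_def\<close>)
  have fin: "finite {a :: bit list. length a = D}"
    using finite_lists_length_eq[OF finite_bit, of D] by simp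
  have un: "{a :: bit list. length a = D} = A0 \<union> A1" using bit_not_zero_iff by (auto simp: A0_def A1_def)
  have "card {a :: bit list. length a = D} = card A0 + card A1"
  proof -
    have f0: "finite A0" by (rule finite_subset[OF _ fin]) (auto simp: A0_def)
    have f1: "finite A1" by (rule finite_subset[OF _ fin]) (auto simp: A1_def)
    have "A0 \<inter> A1 = {}" by (auto simp: A0_def A1_def)
    then show ?thesis unfolding un by (rule card_Un_disjoint[OF f0 f1])
  qed
  moreover have "card A0 = card A1" using bij_betw_same_card[OF bij] .
  ultimately have "2 * card A0 = 2 ^ D" using card_lists[of D] by simp
  moreover have "(2::nat) ^ D = 2 * 2 ^ (D - 1)" using j by (cases D) auto
  ultimately have "card A0 = 2 ^ (D - 1)" by simp
  then show "card {a. length a = D \<and> lin D c a = 0} = 2 ^ (D - 1)"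
    and "card {a. length a = D \<and> lin D c a = 1} = 2 ^ (D - 1)"
    using \<open>card A0 = card A1\<close> by (simp_all add: A0_def A1_def)
qed

lemma lin_zero: "lin D c (replicate D 0) = 0"
  by (simp add: lin_def)


lemma weight_aff:
  assumes j: "j < D" "c j = 1"
  shows "weight (coords D) (aff D c0 c) = (if c0 = 0 then 2 ^ (D - 1) else 2 ^ (D - 1) - 1)"
proof (cases "c0 = 0")
  case True
  have "{a \<in> coords D. aff D c0 c a \<noteq> 0} = {a. length a = D \<and> lin D c a = 1}"
    using True lin_zero[of D c] by (auto simp: coords_def aff_def evalv_def lin_def[symmetric])
  then show ?thesis using True card_lin(2)[of j D c, OF j] by (simp add: weight_def)
next
  case False
  then have c0: "c0 = 1" by simp
  have "{a \<in> coords D. aff D c0 c a \<noteq> 0} = {a. length a = D \<and> lin D c a = 0} - {replicate D 0}"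
    using c0 by (auto simp: coords_def aff_def evalv_def lin_def[symmetric])
  moreover have "replicate D 0 \<in> {a. length a = D \<and> lin D c a = 0}" using lin_zero by simp
  moreover have "finite {a. length a = D \<and> lin D c a = 0}"
  proof -
    have "{a. length a = D \<and> lin D c a = 0} \<subseteq> {a. length a = D}" by auto
    then show ?thesis using finite_subset finite_L by blast
  qed
  ultimately show ?thesis using c0 card_lin(1)[of j D c, OF j] by (simp add: weight_def)
qed


lemma ker_eq: "ker I m (H :: nat \<Rightarrow> bit list vect) = dual I (rowsp m H)"
  unfolding rowsp_eq dual_span by (auto simp: ker_def dual_def)

lemma onev_C: "onev D \<in> RM1p D"
  unfolding RM1p_eq by (rule bv.span_base) simp

lemma xv_C: "xv D i \<in> RM1p D" if "i < D"
  unfolding RM1p_eq using that by (intro bv.span_base) simp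

lemma onev_ne0: assumes D: "D \<ge> 3" shows "onev D \<noteq> 0"
proof
  assume "onev D = 0"
  then have "onev D (sig D 0) = 0" by simp
  then show False using sig_in[OF D, of 0] by (simp add: evalv_def)
qed

lemma span_onev: "bv.span {onev D} = {0, onev D}"
proof -
  have "bv.span {onev D} = range (\<lambda>k. sc k (onev D))" by (rule bv.span_singleton)
  also have "\<dots> = {0, onev D}"
  proof
    show "range (\<lambda>k. sc k (onev D)) \<subseteq> {0, onev D}"
    proof
      fix x assume "x \<in> range (\<lambda>k. sc k (onev D))"
      then obtain k where "x = sc k (onev D)" by auto
      then show "x \<in> {0, onev D}" by (cases k) (auto simp: fun_eq_iff)
    qed
  next
    show "{0, onev D} \<subseteq> range (\<lambda>k. sc k (onev D))"
      using rangeI[of "\<lambda>k. sc k (onev D)" 0] rangeI[of "\<lambda>k. sc k (onev D)" 1]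
      by (auto simp: fun_eq_iff)
  qed
  finally show ?thesis .
qed

lemma rowsp_HX: "rowsp 1 (\<lambda>_. onev D) = {0, onev D}"
proof -
  have "(\<lambda>_. onev D) ` {..<1::nat} = {onev D}" by auto
  then show ?thesis by (simp add: rowsp_eq span_onev)
qed

lemma rank_HX: assumes D: "D \<ge> 3" shows "rank 1 (\<lambda>_. onev D) = 1"
proof -
  have "(\<lambda>_. onev D) ` {..<1::nat} = {onev D}" by auto
  then have "rank 1 (\<lambda>_. onev D) = bv.dim (bv.span {onev D})" by (simp add: rank_eq rowsp_eq)
  also have "\<dots> = 1"
    using bv.dim_span_eq_card_independent[of "{onev D}"] onev_ne0[OF D] by simp
  finally show ?thesis .
qed

lemma weight_le: "finite I \<Longrightarrow> weight I v \<le> card I"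
  unfolding weight_def by (rule card_mono) auto

lemma dX_val:
  assumes D: "D \<ge> 3"
  shows "Min (weight (coords D) ` (RM1p D - {0, onev D})) = 2 ^ (D - 1) - 1"
proof (rule Min_eqI)
  show "finite (weight (coords D) ` (RM1p D - {0, onev D}))"
    by (rule finite_subset[of _ "{..card (coords D)}"]) (auto simp: weight_le)
next
  fix y assume "y \<in> weight (coords D) ` (RM1p D - {0, onev D})"
  then obtain v where v: "v \<in> RM1p D" "v \<noteq> 0" "v \<noteq> onev D" "y = weight (coords D) v" by auto
  obtain c0 c where vc: "v = aff D c0 c" using C_aff[OF v(1)] by auto
  show "2 ^ (D - 1) - 1 \<le> y"
  proof (cases "\<exists>j<D. c j = 1")
    case True
    then obtain j where "j < D" "c j = 1" by auto
    then show ?thesis using weight_aff[of j D c c0] v vc by auto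
  next
    case False
    then have "\<forall>j<D. c j = 0" by auto
    then have "v = sc c0 (onev D)" unfolding vc by (auto simp: aff_def evalv_def fun_eq_iff)
    then show ?thesis using v by (cases c0) (auto simp: fun_eq_iff)
  qed
next
  define c where "c = (\<lambda>i::nat. if i = 0 then (1::bit) else 0)"
  have c0: "c 0 = 1" by (simp add: c_def)
  have l0: "lin D c a = a ! 0" for a
  proof -
    have "lin D c a = (\<Sum>i<D. if i = 0 then a ! i else 0)"
      unfolding lin_def c_def by (intro sum.cong) auto
    then show ?thesis using D by simp
  qed
  have ne0: "aff D 1 c \<noteq> 0"
  proof
    assume "aff D 1 c = 0"
    then have "aff D 1 c (sig D 1) = 0" by simp
    then show False using sig_in[OF D, of 1] D l0[of "sig D 1"]
      by (simp add: aff_def evalv_def lin_def[symmetric] sig_nth)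
  qed
  have ne1: "aff D 1 c \<noteq> onev D"
  proof
    assume "aff D 1 c = onev D"
    then have "aff D 1 c (sig D 0) = onev D (sig D 0)" by simp
    then show False using sig_in[OF D, of 0] D l0[of "sig D 0"]
      by (simp add: aff_def evalv_def lin_def[symmetric] sig_nth)
  qed
  have "weight (coords D) (aff D 1 c) = 2 ^ (D - 1) - 1"
    using weight_aff[of 0 D c 1] c0 D by simp
  then show "2 ^ (D - 1) - 1 \<in> weight (coords D) ` (RM1p D - {0, onev D})"
    using aff_C[of D 1 c] ne0 ne1 by (metis DiffI empty_iff image_eqI insert_iff)
qed

lemma dZ_val:
  assumes D: "D \<ge> 3"
  shows "Min (weight (coords D) ` ({v \<in> vecs (coords D). dot (coords D) (onev D) v = 0}
            - dual (coords D) (RM1p D))) = 2"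
proof (rule Min_eqI)
  show "finite (weight (coords D) ` ({v \<in> vecs (coords D). dot (coords D) (onev D) v = 0}
            - dual (coords D) (RM1p D)))"
    by (rule finite_subset[of _ "{..card (coords D)}"]) (auto simp: weight_le)
next
  fix y assume "y \<in> weight (coords D) ` ({v \<in> vecs (coords D). dot (coords D) (onev D) v = 0}
            - dual (coords D) (RM1p D))"
  then obtain v where v: "v \<in> vecs (coords D)" "dot (coords D) (onev D) v = 0"
    "v \<notin> dual (coords D) (RM1p D)" "y = weight (coords D) v" by auto
  define Sv where "Sv = {a \<in> coords D. v a \<noteq> 0}"
  have finS: "finite Sv" by (simp add: Sv_def)
  have sumS: "(\<Sum>a\<in>coords D. v a) = (\<Sum>a\<in>Sv. v a)"
    by (rule sum.mono_neutral_right) (auto simp: Sv_def)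
  show "2 \<le> y"
  proof (rule ccontr)
    assume "\<not> 2 \<le> y"
    moreover have "y = card Sv" using v(4) by (simp add: weight_def Sv_def)
    ultimately have "card Sv = 0 \<or> card Sv = 1" by linarith
    then show False
    proof
      assume "card Sv = 0"
      then have "Sv = {}" using finS by simp
      then have "v = 0" using v(1) by (auto simp: Sv_def vecs_def fun_eq_iff)
      then show False using v(3) bv.subspace_0[OF dual_subspace] by simp
    next
      assume "card Sv = 1"
      then obtain p where p: "Sv = {p}" using card_1_singletonE by blast
      then have "p \<in> Sv" by simp
      then have "v p = 1" by (simp add: Sv_def)
      then have "(\<Sum>a\<in>coords D. v a) = 1" using sumS p by simp
      then show False using v(2) by (simp add: dot_evalv)
    qed
  qed
next
  define e where "e = delta (sig D 0) + delta (sig D 1)"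
  have s0: "sig D 0 \<in> coords D" and s1: "sig D 1 \<in> coords D" using sig_in[OF D] D by auto
  have ne: "sig D 0 \<noteq> sig D 1" using inj_sig[OF D] D by (auto dest: inj_onD)
  have ev: "e \<in> vecs (coords D)" unfolding e_def
    by (intro bv.subspace_add[OF vecs_subspace] delta_vecs s0 s1)
  have "dot (coords D) (onev D) e = 0"
    using s0 s1 by (simp add: e_def dot_add2 dot_delta evalv_def)
  moreover have "e \<notin> dual (coords D) (RM1p D)"
  proof
    assume "e \<in> dual (coords D) (RM1p D)"
    then have "dot (coords D) (xv D 0) e = 0" using D by (auto simp: mem_dualC)
    then show False using s0 s1 D by (simp add: e_def dot_add2 dot_delta evalv_def sig_nth)
  qed
  moreover have "weight (coords D) e = 2"
  proof -
    have "{a \<in> coords D. e a \<noteq> 0} = {sig D 0, sig D 1}"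
      using s0 s1 ne by (auto simp: e_def delta_def)
    then show ?thesis using ne by (simp add: weight_def)
  qed
  ultimately show "2 \<in> weight (coords D) ` ({v \<in> vecs (coords D). dot (coords D) (onev D) v = 0}
            - dual (coords D) (RM1p D))" using ev by force
qed


definition lz :: "nat \<Rightarrow> nat \<Rightarrow> bit list vect" where
  "lz D b = delta (sig D b) + delta (sig D D) + delta (sig D 0) + delta (sig D 1)"

lemma lz_vecs: assumes D: "D \<ge> 3" and b: "b \<le> D" shows "lz D b \<in> vecs (coords D)"
  unfolding lz_def using sig_in[OF D] D b
  by (intro bv.subspace_add[OF vecs_subspace] delta_vecs) auto

lemma dot_lz: assumes D: "D \<ge> 3" and b: "b \<le> D"
  shows "dot (coords D) g (lz D b) = g (sig D b) + g (sig D D) + g (sig D 0) + g (sig D 1)"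
  unfolding lz_def dot_add2 using sig_in[OF D] D b by (simp add: dot_delta)

lemma dot_onev_lz: assumes D: "D \<ge> 3" and b: "b \<le> D"
  shows "dot (coords D) (onev D) (lz D b) = 0"
  unfolding dot_lz[OF D b] using sig_in[OF D] D b by (simp add: evalv_def)

lemma dot_xv_lz: assumes D: "D \<ge> 3" and a: "a < D" and b: "b < D"
  shows "dot (coords D) (xv D a) (lz D b) = idm a b"
proof -
  have "dot (coords D) (xv D a) (lz D b) = xv D a (sig D b) + xv D a (sig D D) + xv D a (sig D 0) + xv D a (sig D 1)"
    by (rule dot_lz[OF D]) (use b in auto)
  then show ?thesis using sig_in[OF D] D a b
    by (cases "a = 0"; cases "a = 1"; simp add: evalv_def sig_nth idm_def)
qed

definition tv :: "nat \<Rightarrow> nat \<Rightarrow> bit list \<Rightarrow> bit list" where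
  "tv a b x = x[a := x ! a + x ! b]"

lemma upd_rep0[simp]: "(replicate D (0::bit))[a := 0] = replicate D 0"
proof (cases "a < D")
  case True
  then show ?thesis by (metis length_replicate list_update_id nth_replicate)
next
  case False
  then show ?thesis by (simp add: list_update_beyond)
qed

lemma tv_tv: "a \<noteq> b \<Longrightarrow> a < length x \<Longrightarrow> b < length x \<Longrightarrow> tv a b (tv a b x) = x"
  by (simp add: tv_def add.assoc)

lemma tv_coords: assumes ab: "a \<noteq> b" "a < D" "b < D" and x: "x \<in> coords D"
  shows "tv a b x \<in> coords D"
proof -
  have l: "length (tv a b x) = D" using x by (simp add: tv_def coords_def)
  have "tv a b x \<noteq> replicate D 0"
  proof
    assume "tv a b x = replicate D 0"
    then have "tv a b (tv a b x) = tv a b (replicate D 0)" by simp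
    then have "x = replicate D 0" using tv_tv[OF ab(1), of x] ab x by (simp add: coords_def tv_def)
    then show False using x by (simp add: coords_def)
  qed
  then show ?thesis using l by (simp add: coords_def)
qed

lemma tv_bij: assumes ab: "a \<noteq> b" "a < D" "b < D"
  shows "bij_betw (tv a b) (coords D) (coords D)"
  by (rule bij_betw_byWitness[where f' = "tv a b"])
    (use tv_coords[OF ab] tv_tv[OF ab(1)] ab in \<open>auto simp: coords_def\<close>)

lemma tv_tv_coords: assumes ab: "a \<noteq> b" "a < D" "b < D" and x: "x \<in> coords D"
  shows "tv a b (tv a b x) = x"
  using tv_tv[OF ab(1)] ab x by (simp add: coords_def)

lemma permute_evalv: assumes "\<And>x. x \<in> coords D \<Longrightarrow> s x \<in> coords D"
  shows "permute (coords D) s (evalv D f) = evalv D (\<lambda>x. f (s x))"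
  using assms by (auto simp: permute_def evalv_def fun_eq_iff)

lemma permute_onev: assumes "\<And>x. x \<in> coords D \<Longrightarrow> s x \<in> coords D"
  shows "permute (coords D) s (onev D) = onev D"
  using permute_evalv[OF assms] by simp

lemma permute_xv: assumes ab: "a \<noteq> b" "a < D" "b < D" and i: "i < D"
  shows "permute (coords D) (tv a b) (xv D i) = xv D i + (if i = a then xv D b else 0)"
proof -
  have "permute (coords D) (tv a b) (xv D i) = evalv D (\<lambda>x. (tv a b x) ! i)"
    by (rule permute_evalv) (rule tv_coords[OF ab])
  then show ?thesis
    using ab i by (auto simp: fun_eq_iff evalv_def tv_def coords_def nth_list_update)
qed

lemma permute_vecs: "permute I s v \<in> vecs I"
  by (simp add: permute_def vecs_def)

lemma permute_add: "permute I s (u + v) = permute I s u + permute I s v"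
  by (simp add: permute_def fun_eq_iff)

lemma permute_sc: "permute I s (sc c u) = sc c (permute I s u)"
  by (simp add: permute_def fun_eq_iff)

lemma permute_zero: "permute I s 0 = 0"
  by (simp add: permute_def fun_eq_iff)

lemma permute_permute: assumes "v \<in> vecs I" "\<And>x. x \<in> I \<Longrightarrow> s x \<in> I" "\<And>x. x \<in> I \<Longrightarrow> s (s x) = x"
  shows "permute I s (permute I s v) = v"
  using assms by (auto simp: permute_def fun_eq_iff vecs_def)

lemma dot_permute: assumes bij: "bij_betw s I I" and inv: "\<And>x. x \<in> I \<Longrightarrow> s (s x) = x"
  shows "dot I (permute I s u) v = dot I u (permute I s v)"
proof -
  have "dot I (permute I s u) v = (\<Sum>j\<in>I. u (s j) * v (s (s j)))"
    unfolding dot_def permute_def using inv by (intro sum.cong) auto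
  also have "\<dots> = (\<Sum>j\<in>I. u j * v (s j))"
    by (rule sum.reindex_bij_betw[OF bij, of "\<lambda>j. u j * v (s j)"])
  also have "\<dots> = dot I u (permute I s v)"
    unfolding dot_def permute_def by (intro sum.cong) auto
  finally show ?thesis .
qed

lemma perm_span: assumes "x \<in> bv.span S" shows "permute I s x \<in> bv.span (permute I s ` S)"
proof -
  have sub: "bv.subspace {x. permute I s x \<in> bv.span (permute I s ` S)}"
    by (auto simp: bv.subspace_def permute_add permute_sc permute_zero
        intro: bv.span_add bv.span_scale bv.span_zero)
  have "S \<subseteq> {x. permute I s x \<in> bv.span (permute I s ` S)}"
    by (auto intro: bv.span_base)
  then have "bv.span S \<subseteq> {x. permute I s x \<in> bv.span (permute I s ` S)}"
    by (rule bv.span_minimal[OF _ sub])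
  then show ?thesis using assms by auto
qed

lemma perm_C: assumes ab: "a \<noteq> b" "a < D" "b < D" and v: "v \<in> RM1p D"
  shows "permute (coords D) (tv a b) v \<in> RM1p D"
proof -
  have g: "permute (coords D) (tv a b) ` insert (onev D) (xv D ` {..<D}) \<subseteq> RM1p D"
  proof
    fix y assume "y \<in> permute (coords D) (tv a b) ` insert (onev D) (xv D ` {..<D})"
    then consider "y = permute (coords D) (tv a b) (onev D)"
      | i where "i < D" "y = permute (coords D) (tv a b) (xv D i)" by auto
    then show "y \<in> RM1p D"
    proof cases
      case 1 then show ?thesis using permute_onev[OF tv_coords[OF ab]] onev_C by simp
    next
      case (2 i)
      then show ?thesis using permute_xv[OF ab 2(1)] xv_C[of i D] xv_C[of b D] ab
        unfolding RM1p_eq by (auto intro: bv.span_add bv.span_zero)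
    qed
  qed
  have "permute (coords D) (tv a b) v \<in> bv.span (permute (coords D) (tv a b) ` insert (onev D) (xv D ` {..<D}))"
    by (rule perm_span) (use v in \<open>simp add: RM1p_eq\<close>)
  also have "\<dots> \<subseteq> RM1p D"
    using bv.span_mono[OF g] by (simp add: RM1p_eq bv.span_span)
  finally show ?thesis .
qed

lemma perm_dual: assumes ab: "a \<noteq> b" "a < D" "b < D" and v: "v \<in> dual (coords D) (RM1p D)"
  shows "permute (coords D) (tv a b) v \<in> dual (coords D) (RM1p D)"
proof -
  have "dot (coords D) c (permute (coords D) (tv a b) v) = 0" if c: "c \<in> RM1p D" for c
  proof -
    have "dot (coords D) c (permute (coords D) (tv a b) v) = dot (coords D) (permute (coords D) (tv a b) c) v"
      by (rule dot_permute[OF tv_bij[OF ab] tv_tv_coords[OF ab], symmetric])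
    also have "\<dots> = 0" using perm_C[OF ab c] v by (auto simp: dual_def)
    finally show ?thesis .
  qed
  then show ?thesis by (auto simp: dual_def permute_vecs)
qed

lemma matrows_sum: "matrows k M L c = (\<Sum>d<k. sc (M c d) (L d))"
  by (simp add: matrows_def fun_eq_iff sum_fun_apply)

lemma dot_matrows: "dot I g (matrows k M (L :: nat \<Rightarrow> bit list vect) c) = (\<Sum>d<k. M c d * dot I g (L d))"
  by (simp add: matrows_sum dot_sum2 dot_sc2)


lemma sum_A: assumes "c < k" "b < k"
  shows "(\<Sum>d<k. (idm c d + (if c = a \<and> d = b then 1 else 0)) * f d) = f c + (if c = a then f b else (0::bit))"
proof -
  have "(\<Sum>d<k. (idm c d + (if c = a \<and> d = b then 1 else 0)) * f d)
      = (\<Sum>d<k. (if d = c then f d else 0) + (if d = b then (if c = a then f d else 0) else 0))"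
    by (intro sum.cong) (auto simp: idm_def)
  also have "\<dots> = f c + (if c = a then f b else 0)"
  proof -
    have "(\<Sum>d<k. (if d = c then f d else 0) + (if d = b then (if c = a then f d else 0) else 0))
       = (\<Sum>d<k. if d = c then f d else 0) + (\<Sum>d<k. if d = b then (if c = a then f d else 0) else 0)"
      by (rule sum.distrib)
    also have "\<dots> = f c + (if c = a then f b else 0)" using assms by simp
    finally show ?thesis .
  qed
  finally show ?thesis .
qed

lemma sum_idm: assumes "e < k"
  shows "(\<Sum>d<k. g d * idm e d) = (g e :: bit)"
proof -
  have "(\<Sum>d<k. g d * idm e d) = (\<Sum>d<k. if d = e then g d else 0)"
    by (intro sum.cong) (auto simp: idm_def)
  then show ?thesis using assms by simp
qed

lemma impl:
  assumes D: "D \<ge> 3" and rZ: "rowsp mZ HZ = dual (coords D) (RM1p D)"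
    and ab: "a \<noteq> b" "a < D" "b < D"
  shows "implements (coords D) 1 (\<lambda>_. onev D) mZ HZ D (xv D) (lz D) (tv a b)
           (\<lambda>i j. idm i j + (if i = a \<and> j = b then 1 else 0))"
proof -
  define A where "A = (\<lambda>i j. idm i j + (if i = a \<and> j = b then 1 else (0::bit)))"
  let ?p = "permute (coords D) (tv a b)"
  have bij: "bij_betw (tv a b) (coords D) (coords D)" by (rule tv_bij[OF ab])
  have inv: "\<And>x. x \<in> coords D \<Longrightarrow> tv a b (tv a b x) = x" by (rule tv_tv_coords[OF ab])
  have into: "\<And>x. x \<in> coords D \<Longrightarrow> tv a b x \<in> coords D" by (rule tv_coords[OF ab])
  have HZd: "HZ i \<in> dual (coords D) (RM1p D)" if "i < mZ" for i
    using that rZ[symmetric] unfolding rowsp_eq by (auto intro: bv.span_base)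
  have AA: "(\<Sum>c<D. A x c * A c y) = idm x y" if "x < D" "y < D" for x y
  proof -
    have "(\<Sum>c<D. A x c * A c y) = A x y + (if x = a then A b y else 0)"
      unfolding A_def by (rule sum_A) (use that ab in auto)
    then show ?thesis using ab by (auto simp: A_def idm_def)
  qed
  have r1: "rowsp 1 (\<lambda>i. ?p (onev D)) = rowsp 1 (\<lambda>_. onev D)"
    using permute_onev[OF into] by simp
  have r2: "rowsp mZ (\<lambda>i. ?p (HZ i)) = rowsp mZ HZ"
  proof
    show "rowsp mZ (\<lambda>i. ?p (HZ i)) \<subseteq> rowsp mZ HZ"
      unfolding rZ rowsp_eq[of mZ "\<lambda>i. ?p (HZ i)"]
      by (rule bv.span_minimal[OF _ dual_subspace]) (use perm_dual[OF ab] HZd in auto)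
  next
    show "rowsp mZ HZ \<subseteq> rowsp mZ (\<lambda>i. ?p (HZ i))"
    proof
      fix v assume v: "v \<in> rowsp mZ HZ"
      then have vd: "v \<in> dual (coords D) (RM1p D)" using rZ by simp
      then have "?p v \<in> rowsp mZ HZ" using perm_dual[OF ab] rZ by simp
      then have "?p (?p v) \<in> bv.span (?p ` HZ ` {..<mZ})"
        unfolding rowsp_eq by (rule perm_span)
      moreover have "?p (?p v) = v"
        using vd by (intro permute_permute into inv) (auto simp: dual_def)
      ultimately show "v \<in> rowsp mZ (\<lambda>i. ?p (HZ i))"
        by (simp add: rowsp_eq image_image)
    qed
  qed
  have lx: "?p (xv D c) - matrows D A (xv D) c \<in> rowsp 1 (\<lambda>_. onev D)" if c: "c < D" for c
  proof -
    have "matrows D A (xv D) c = ?p (xv D c)"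
    proof
      fix j
      have "matrows D A (xv D) c j = xv D c j + (if c = a then xv D b j else 0)"
        unfolding matrows_def A_def by (rule sum_A) (use c ab in auto)
      then show "matrows D A (xv D) c j = ?p (xv D c) j"
        using permute_xv[OF ab c] by simp
    qed
    then show ?thesis by (simp add: rowsp_eq bv.span_zero)
  qed
  have lzc: "?p (lz D c) - matrows D (\<lambda>x y. A y x) (lz D) c \<in> rowsp mZ HZ" if c: "c < D" for c
    unfolding rZ mem_dualC
  proof (intro conjI allI impI)
    show "?p (lz D c) - matrows D (\<lambda>x y. A y x) (lz D) c \<in> vecs (coords D)"
      unfolding matrows_sum
      by (intro bv.subspace_diff[OF vecs_subspace] bv.subspace_sum[OF vecs_subspace]
          bv.subspace_scale[OF vecs_subspace] permute_vecs lz_vecs[OF D]) (use c in auto)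
  next
    have "dot (coords D) (onev D) (?p (lz D c)) = dot (coords D) (?p (onev D)) (lz D c)"
      by (rule dot_permute[OF bij inv, symmetric])
    also have "\<dots> = 0" using permute_onev[OF into] dot_onev_lz[OF D] c by simp
    finally have "dot (coords D) (onev D) (?p (lz D c)) = 0" .
    moreover have "dot (coords D) (onev D) (matrows D (\<lambda>x y. A y x) (lz D) c) = 0"
      unfolding dot_matrows using dot_onev_lz[OF D] by simp
    ultimately show "dot (coords D) (onev D) (?p (lz D c) - matrows D (\<lambda>x y. A y x) (lz D) c) = 0"
      by (simp add: dot_diff2)
  next
    fix e assume e: "e < D"
    have "dot (coords D) (xv D e) (?p (lz D c)) = dot (coords D) (?p (xv D e)) (lz D c)"
      by (rule dot_permute[OF bij inv, symmetric])
    also have "\<dots> = idm e c + (if e = a then idm b c else 0)"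
      unfolding permute_xv[OF ab e] dot_add1 using dot_xv_lz[OF D e c] dot_xv_lz[OF D ab(3) c]
      by simp
    finally have 1: "dot (coords D) (xv D e) (?p (lz D c)) = idm e c + (if e = a then idm b c else 0)" .
    have "dot (coords D) (xv D e) (matrows D (\<lambda>x y. A y x) (lz D) c) = (\<Sum>d<D. A d c * idm e d)"
      unfolding dot_matrows using dot_xv_lz[OF D e] by simp
    also have "\<dots> = A e c" by (rule sum_idm[OF e])
    finally have 2: "dot (coords D) (xv D e) (matrows D (\<lambda>x y. A y x) (lz D) c) = A e c" .
    show "dot (coords D) (xv D e) (?p (lz D c) - matrows D (\<lambda>x y. A y x) (lz D) c) = 0"
      unfolding dot_diff2 1 2 using ab by (auto simp: A_def idm_def)
  qed
  show ?thesis
    unfolding implements_def A_def[symmetric]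
    apply (rule conjI[OF bij])
    apply (rule exI[of _ A])
    apply (intro conjI allI impI)
    using AA r1 r2 lx lzc by auto
qed



theorem mainTheorem13:
  fixes D mZ :: nat and HZ :: "nat \<Rightarrow> bit list vect"
  assumes "D \<ge> 3"
    and "rowsp mZ HZ = dual (coords D) (RM1p D)"
  shows "css (coords D) 1 (\<lambda>_. evalv D (\<lambda>_. 1)) mZ HZ
       \<and> css_k (coords D) 1 (\<lambda>_. evalv D (\<lambda>_. 1)) mZ HZ = D
       \<and> css_dX (coords D) 1 (\<lambda>_. evalv D (\<lambda>_. 1)) mZ HZ = 2 ^ (D - 1) - 1
       \<and> css_dZ (coords D) 1 (\<lambda>_. evalv D (\<lambda>_. 1)) mZ HZ = 2
       \<and> phantom (coords D) 1 (\<lambda>_. evalv D (\<lambda>_. 1)) mZ HZ"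
proof -
  note D = assms(1)
  note rZ = assms(2)
  have HZd: "HZ i \<in> dual (coords D) (RM1p D)" if "i < mZ" for i
    using that rZ[symmetric] unfolding rowsp_eq by (auto intro: bv.span_base)
  have css: "css (coords D) 1 (\<lambda>_. onev D) mZ HZ"
    unfolding css_def
  proof (intro conjI allI impI)
    show "finite (coords D)" by simp
  next
    fix i :: nat show "onev D \<in> vecs (coords D)" by simp
  next
    fix i assume "i < mZ" then show "HZ i \<in> vecs (coords D)" using HZd by (auto simp: dual_def)
  next
    fix i j assume "i < (1::nat)" "j < mZ"
    then show "dot (coords D) (onev D) (HZ j) = 0" using HZd onev_C by (auto simp: dual_def)
  qed
  have rkZ: "rank mZ HZ = card (coords D) - (D + 1)"
    unfolding rank_eq rZ by (rule dim_dualC[OF D])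
  have k: "css_k (coords D) 1 (\<lambda>_. onev D) mZ HZ = D"
    unfolding css_k_def rank_HX[OF D] rkZ using card_coords_ge[OF D] by simp
  have kerZ: "ker (coords D) mZ HZ = RM1p D" by (simp add: ker_eq rZ ddual[OF D])
  have kerX: "ker (coords D) 1 (\<lambda>_. onev D) = {v \<in> vecs (coords D). dot (coords D) (onev D) v = 0}"
    by (auto simp: ker_def)
  have dX: "css_dX (coords D) 1 (\<lambda>_. onev D) mZ HZ = 2 ^ (D - 1) - 1"
    unfolding css_dX_def kerZ rowsp_HX by (rule dX_val[OF D])
  have dZ: "css_dZ (coords D) 1 (\<lambda>_. onev D) mZ HZ = 2"
    unfolding css_dZ_def kerX rZ by (rule dZ_val[OF D])
  have basis: "css_basis (coords D) 1 (\<lambda>_. onev D) mZ HZ D (xv D) (lz D)"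
    unfolding css_basis_def kerZ kerX
  proof (intro conjI allI impI)
    fix a assume a: "a < D"
    show "xv D a \<in> RM1p D" by (rule xv_C[OF a])
    show "lz D a \<in> {v \<in> vecs (coords D). dot (coords D) (onev D) v = 0}"
      using lz_vecs[OF D] dot_onev_lz[OF D] a by simp
  next
    fix a b assume "a < D" "b < D"
    then show "dot (coords D) (xv D a) (lz D b) = (if a = b then 1 else 0)"
      using dot_xv_lz[OF D] by (simp add: idm_def)
  qed
  have ph: "phantom (coords D) 1 (\<lambda>_. onev D) mZ HZ"
    unfolding phantom_def Let_def k
    using basis impl[OF D rZ] by blast
  show ?thesis using css k dX dZ ph by simp
qed

end
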